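(* Consider the Markowitz portfolio setting of the context with fixed return level $m\neq0$, and assume conditions MP1–MP4, with rates $r_1,r_2,r_3$ satisfying $\max(r_1,r_2,r_3)=o(1)$ as $n,p\to\infty$. In the first step choose $\lambda\ge C\big(\Delta_ps(r_2+r_3^2)+r_3\big)$ with $C>0$ a sufficiently large constant. If $sr_1+\Delta_ps^2(r_2+r_3^2)=o(1)$, then $\hat{\mathbf w}$ is ratio consistent, i.e. $R(\hat{\mathbf w})/R(\mathbf w^* )\to1$ in probability as $n,p\to\infty$.
   Context: Let $\mathbf x_1,\dots,\mathbf x_n$ be observations from a stationary $p$-dimensional time series with mean $\boldsymbol\mu$ and invertible covariance matrix $\Sigma=(\sigma_{jk})$ (asymptotics along a sequence with $n,p\to\infty$). Let $\boldsymbol\theta=\Sigma^{-1}\boldsymbol\mu$, $\Delta_p=\boldsymbol\mu^\top\Sigma^{-1}\boldsymbol\mu>0$, $\mathbf w^*=m\boldsymbol\theta/\Delta_p$ (the minimizer of $\mathbf w^\top\Sigma\mathbf w$ subject to $\mathbf w^\top\boldsymbol\mu=m$), and $R(\mathbf w)=\mathbf w^\top\Sigma\mathbf w$, so $R(\mathbf w^* )=m^2/\Delta_p$. Let $\bar{\mathbf x}=n^{-1}\sum_i\mathbf x_i$, $\hat S_n=n^{-1}\sum_{i=1}^n(\mathbf x_i-\bar{\mathbf x})(\mathbf x_i-\bar{\mathbf x})^\top$, $\check S_n=n^{-1}\sum_{i=1}^n(\mathbf x_i-\boldsymbol\mu)(\mathbf x_i-\boldsymbol\mu)^\top$. Estimator: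 $\hat{\boldsymbol\theta}$ is a solution of $\min_{\boldsymbol\eta}|\boldsymbol\eta|_1$ subject to $|\hat S_n\boldsymbol\eta-\bar{\mathbf x}|_\infty\le\lambda$; then $\hat\Delta_{p,n}=\bar{\mathbf x}^\top\hat{\boldsymbol\theta}$ and $\hat{\mathbf w}=m\hat{\boldsymbol\theta}/\hat\Delta_{p,n}$. For a matrix $M$, $|M|_\infty=\max_{j,k}|m_{jk}|$; $|\mathbf v|_0$ is the number of nonzero entries. Conditions: MP1: $|\mathbf w^*|_0\le s$ and $|\mathbf w^*|_\infty\le C_w$ for a constant $C_w>0$. MP2: $|\check S_n-\Sigma|_\infty=O_{\mathbb P}(r_2)$ and $|\bar{\mathbf x}-\boldsymbol\mu|_\infty=O_{\mathbb P}(r_3)$. MP3: for constants $K_1,K_2,C>0$, $|\mu_j|\le K_1$, $\sigma_{jj}\le K_2$ for all $j$, and $R(\mathbf w^* )\le C$. MP4: the estimator $\hat{\boldsymbol\theta}$ satisfies $|\hat{\boldsymbol\theta}-\boldsymbol\theta|_1=O_{\mathbb P}(r_1)$. *)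

theory Defs
  imports "HOL-Probability.Probability"
begin

text \<open>Vectors in R^p are functions nat => real (only indices < p matter);
  p x p matrices are functions nat => nat => real (only indices < p matter).
  Data: X i omega j is coordinate j of observation x_i (i < n) at sample point omega.\<close>

definition l1norm :: "nat \<Rightarrow> (nat \<Rightarrow> real) \<Rightarrow> real" where
  "l1norm p v = (\<Sum>j<p. \<bar>v j\<bar>)"

definition supnorm :: "nat \<Rightarrow> (nat \<Rightarrow> real) \<Rightarrow> real" where
  "supnorm p v = Max (insert 0 ((\<lambda>j. \<bar>v j\<bar>) ` {..<p}))"

definition l0norm :: "nat \<Rightarrow> (nat \<Rightarrow> real) \<Rightarrow> nat" where
  "l0norm p v = card {j. j < p \<and> v j \<noteq> 0}"

definition mat_supnorm :: "nat \<Rightarrow> (nat \<Rightarrow> nat \<Rightarrow> real) \<Rightarrow> real" where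
  "mat_supnorm p A = Max (insert 0 ((\<lambda>(j,l). \<bar>A j l\<bar>) ` ({..<p} \<times> {..<p})))"

definition dotp :: "nat \<Rightarrow> (nat \<Rightarrow> real) \<Rightarrow> (nat \<Rightarrow> real) \<Rightarrow> real" where
  "dotp p u v = (\<Sum>j<p. u j * v j)"

definition matvec :: "nat \<Rightarrow> (nat \<Rightarrow> nat \<Rightarrow> real) \<Rightarrow> (nat \<Rightarrow> real) \<Rightarrow> (nat \<Rightarrow> real)" where
  "matvec p A v = (\<lambda>j. \<Sum>l<p. A j l * v l)"

text \<open>Quadratic form w^T A w, i.e. the risk R(w) when A = Sigma.\<close>
definition quadf :: "nat \<Rightarrow> (nat \<Rightarrow> nat \<Rightarrow> real) \<Rightarrow> (nat \<Rightarrow> real) \<Rightarrow> real" where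
  "quadf p A w = (\<Sum>j<p. \<Sum>l<p. w j * A j l * w l)"

definition xbar :: "nat \<Rightarrow> (nat \<Rightarrow> 'a \<Rightarrow> nat \<Rightarrow> real) \<Rightarrow> 'a \<Rightarrow> nat \<Rightarrow> real" where
  "xbar n X \<omega> j = (\<Sum>i<n. X i \<omega> j) / real n"

definition Shat :: "nat \<Rightarrow> (nat \<Rightarrow> 'a \<Rightarrow> nat \<Rightarrow> real) \<Rightarrow> 'a \<Rightarrow> nat \<Rightarrow> nat \<Rightarrow> real" where
  "Shat n X \<omega> j l = (\<Sum>i<n. (X i \<omega> j - xbar n X \<omega> j) * (X i \<omega> l - xbar n X \<omega> l)) / real n"

definition Scheck :: "nat \<Rightarrow> (nat \<Rightarrow> 'a \<Rightarrow> nat \<Rightarrow> real) \<Rightarrow> (nat \<Rightarrow> real) \<Rightarrow> 'a \<Rightarrow> nat \<Rightarrow> nat \<Rightarrow> real" where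
  "Scheck n X mu \<omega> j l = (\<Sum>i<n. (X i \<omega> j - mu j) * (X i \<omega> l - mu l)) / real n"

definition dantzig_feasible :: "nat \<Rightarrow> (nat \<Rightarrow> nat \<Rightarrow> real) \<Rightarrow> (nat \<Rightarrow> real) \<Rightarrow> real \<Rightarrow> (nat \<Rightarrow> real) \<Rightarrow> bool" where
  "dantzig_feasible p S b lam eta \<longleftrightarrow> supnorm p (\<lambda>j. matvec p S eta j - b j) \<le> lam"

definition dantzig_solution :: "nat \<Rightarrow> (nat \<Rightarrow> nat \<Rightarrow> real) \<Rightarrow> (nat \<Rightarrow> real) \<Rightarrow> real \<Rightarrow> (nat \<Rightarrow> real) \<Rightarrow> bool" where
  "dantzig_solution p S b lam eta \<longleftrightarrow> dantzig_feasible p S b lam eta \<and>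
     (\<forall>eta'. dantzig_feasible p S b lam eta' \<longrightarrow> l1norm p eta \<le> l1norm p eta')"

definition bigOP :: "'a measure \<Rightarrow> (nat \<Rightarrow> 'a \<Rightarrow> real) \<Rightarrow> (nat \<Rightarrow> real) \<Rightarrow> bool" where
  "bigOP M Z r \<longleftrightarrow> (\<forall>\<epsilon>>0. \<exists>B. \<exists>K. \<forall>k\<ge>K.
     measure M {\<omega> \<in> space M. \<bar>Z k \<omega>\<bar> > B * r k} < \<epsilon>)"

definition conv_in_prob :: "'a measure \<Rightarrow> (nat \<Rightarrow> 'a \<Rightarrow> real) \<Rightarrow> real \<Rightarrow> bool" where
  "conv_in_prob M Z c \<longleftrightarrow> (\<forall>\<epsilon>>0.
     (\<lambda>k. measure M {\<omega> \<in> space M. \<bar>Z k \<omega> - c\<bar> > \<epsilon>}) \<longlonglongrightarrow> 0)"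

end

theory Submission
  imports Defs
begin


lemma supnorm_ge: "j < p \<Longrightarrow> \<bar>v j\<bar> \<le> supnorm p v"
  unfolding supnorm_def by (intro Max_ge) auto

lemma supnorm_gt_iff: "t < supnorm p v \<longleftrightarrow> t < 0 \<or> (\<exists>j<p. t < \<bar>v j\<bar>)"
  unfolding supnorm_def by (subst Max_gr_iff) auto

lemma supnorm_nonneg: "0 \<le> supnorm p v"
  unfolding supnorm_def by (intro Max_ge) auto

lemma l1norm_nonneg: "0 \<le> l1norm p v"
  unfolding l1norm_def by (simp add: sum_nonneg)

lemma dotp_bound:
  assumes "\<And>j. j < p \<Longrightarrow> \<bar>u j\<bar> \<le> K"
  shows "\<bar>dotp p u v\<bar> \<le> K * l1norm p v"
proof -
  have "\<bar>dotp p u v\<bar> \<le> (\<Sum>j<p. \<bar>u j * v j\<bar>)" unfolding dotp_def by (rule sum_abs)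
  also have "\<dots> \<le> (\<Sum>j<p. K * \<bar>v j\<bar>)"
    by (intro sum_mono) (auto simp: abs_mult intro: mult_right_mono assms)
  finally show ?thesis by (simp add: l1norm_def sum_distrib_left)
qed

lemma quadf_bound:
  assumes "\<And>j l. j < p \<Longrightarrow> l < p \<Longrightarrow> \<bar>A j l\<bar> \<le> K"
  shows "\<bar>quadf p A d\<bar> \<le> K * (l1norm p d)^2"
proof -
  have "\<bar>quadf p A d\<bar> \<le> (\<Sum>j<p. \<bar>\<Sum>l<p. d j * A j l * d l\<bar>)" unfolding quadf_def by (rule sum_abs)
  also have "\<dots> \<le> (\<Sum>j<p. \<Sum>l<p. \<bar>d j * A j l * d l\<bar>)" by (intro sum_mono sum_abs)
  also have "\<dots> \<le> (\<Sum>j<p. \<Sum>l<p. K * (\<bar>d l\<bar> * \<bar>d j\<bar>))"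
  proof (intro sum_mono)
    fix j l assume "j \<in> {..<p}" "l \<in> {..<p}"
    then have "\<bar>A j l\<bar> \<le> K" using assms by auto
    then have "\<bar>A j l\<bar> * (\<bar>d l\<bar> * \<bar>d j\<bar>) \<le> K * (\<bar>d l\<bar> * \<bar>d j\<bar>)"
      by (intro mult_right_mono) auto
    then show "\<bar>d j * A j l * d l\<bar> \<le> K * (\<bar>d l\<bar> * \<bar>d j\<bar>)"
      by (simp add: abs_mult ac_simps)
  qed
  also have "\<dots> = K * (l1norm p d)^2"
    by (simp add: l1norm_def power2_eq_square sum_product sum_distrib_left sum_distrib_right)
  finally show ?thesis .
qed

lemma quadf_scale: "quadf p A (\<lambda>j. c * w j) = c^2 * quadf p A w"
  unfolding quadf_def by (simp add: sum_distrib_left power2_eq_square algebra_simps)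

lemma quadf_matvec: "quadf p A w = dotp p w (matvec p A w)"
  unfolding quadf_def dotp_def matvec_def by (simp add: sum_distrib_left mult.assoc)

lemma quadf_add:
  assumes sym: "\<And>j l. j < p \<Longrightarrow> l < p \<Longrightarrow> A j l = A l j"
  shows "quadf p A (\<lambda>j. t j + d j) = quadf p A t + 2 * dotp p d (matvec p A t) + quadf p A d"
proof -
  have e1: "(\<Sum>j<p. \<Sum>l<p. t j * A j l * d l) = (\<Sum>l<p. \<Sum>j<p. d l * A l j * t j)"
    by (subst sum.swap) (auto intro!: sum.cong simp: sym)
  have "quadf p A (\<lambda>j. t j + d j) = (\<Sum>j<p. \<Sum>l<p. t j * A j l * t l + t j * A j l * d l + d j * A j l * t l + d j * A j l * d l)"
    unfolding quadf_def by (intro sum.cong refl) (simp add: algebra_simps)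
  also have "\<dots> = quadf p A t + (\<Sum>j<p. \<Sum>l<p. t j * A j l * d l) + (\<Sum>j<p. \<Sum>l<p. d j * A j l * t l) + quadf p A d"
    unfolding quadf_def by (simp add: sum.distrib)
  also have "\<dots> = quadf p A t + 2 * dotp p d (matvec p A t) + quadf p A d"
    unfolding e1 dotp_def matvec_def by (simp add: sum_distrib_left mult.assoc)
  finally show ?thesis .
qed

lemma ratio_lemma:
  fixes a b eta :: real
  assumes "\<bar>a - 1\<bar> \<le> eta" "\<bar>b - 1\<bar> \<le> eta" "eta \<le> 1/4"
  shows "\<bar>a / b^2 - 1\<bar> \<le> 6 * eta"
proof -
  have b: "b \<ge> 3/4" "b \<le> 5/4" using assms by auto
  have b2: "b^2 \<ge> 9/16" using power_mono[OF b(1), of 2] by (simp add: power2_eq_square)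
  have "\<bar>1 - b^2\<bar> = \<bar>1 - b\<bar> * \<bar>1 + b\<bar>" by (simp add: power2_eq_square abs_mult[symmetric] algebra_simps)
  also have "\<dots> \<le> eta * (9/4)" using assms b by (intro mult_mono) auto
  finally have h: "\<bar>1 - b^2\<bar> \<le> eta * (9/4)" .
  have "\<bar>a - b^2\<bar> \<le> \<bar>a - 1\<bar> + \<bar>1 - b^2\<bar>" by linarith
  also have "\<dots> \<le> eta * (13/4)" using assms h by linarith
  finally have h2: "\<bar>a - b^2\<bar> \<le> eta * (13/4)" .
  have "b^2 \<noteq> 0" using b2 by auto
  then have "a / b^2 - 1 = (a - b^2) / b^2" by (simp add: diff_divide_distrib)
  then have "\<bar>a / b^2 - 1\<bar> = \<bar>a - b^2\<bar> / b^2" by simp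
  also have "\<dots> \<le> (eta * (13/4)) / (9/16)" using b2 h2 assms(1)
    by (intro frac_le) auto
  also have "\<dots> \<le> 6 * eta" using assms(1) by simp
  finally show ?thesis .
qed



lemma amgm_abs: "\<bar>u * v\<bar> \<le> (u * u + v * v) / (2::real)"
proof -
  have "0 \<le> (\<bar>u\<bar> - \<bar>v\<bar>)^2" by simp
  then have "0 \<le> \<bar>u\<bar> * \<bar>u\<bar> + \<bar>v\<bar> * \<bar>v\<bar> - 2 * (\<bar>u\<bar> * \<bar>v\<bar>)"
    by (simp add: power2_eq_square algebra_simps)
  moreover have "\<bar>u\<bar> * \<bar>u\<bar> = u * u" "\<bar>v\<bar> * \<bar>v\<bar> = v * v" by (simp_all add: abs_mult_self_eq)
  ultimately show ?thesis by (simp add: abs_mult)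
qed

lemma cov_bound:
  fixes Y Z :: "'a \<Rightarrow> real"
  assumes P: "prob_space M" and [measurable]: "Y \<in> borel_measurable M" "Z \<in> borel_measurable M"
    and iY: "integrable M (\<lambda>\<omega>. (Y \<omega>)^2)" and iZ: "integrable M (\<lambda>\<omega>. (Z \<omega>)^2)"
  shows "\<bar>integral\<^sup>L M (\<lambda>\<omega>. (Y \<omega> - a) * (Z \<omega> - b))\<bar>
     \<le> (integral\<^sup>L M (\<lambda>\<omega>. (Y \<omega> - a) * (Y \<omega> - a)) + integral\<^sup>L M (\<lambda>\<omega>. (Z \<omega> - b) * (Z \<omega> - b))) / 2"
proof -
  interpret prob_space M by (rule P)
  have Y1: "integrable M Y" by (rule square_integrable_imp_integrable) (use iY in auto)
  have Z1: "integrable M Z" by (rule square_integrable_imp_integrable) (use iZ in auto)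
  have eU: "(\<lambda>\<omega>. (Y \<omega> - a) * (Y \<omega> - a)) = (\<lambda>\<omega>. (Y \<omega>)^2 - 2 * a * Y \<omega> + a^2)"
    by (auto simp: power2_eq_square algebra_simps)
  have eV: "(\<lambda>\<omega>. (Z \<omega> - b) * (Z \<omega> - b)) = (\<lambda>\<omega>. (Z \<omega>)^2 - 2 * b * Z \<omega> + b^2)"
    by (auto simp: power2_eq_square algebra_simps)
  have iU: "integrable M (\<lambda>\<omega>. (Y \<omega> - a) * (Y \<omega> - a))"
    unfolding eU using iY Y1 by (intro Bochner_Integration.integrable_add Bochner_Integration.integrable_diff) auto
  have iV: "integrable M (\<lambda>\<omega>. (Z \<omega> - b) * (Z \<omega> - b))"
    unfolding eV using iZ Z1 by (intro Bochner_Integration.integrable_add Bochner_Integration.integrable_diff) auto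
  let ?S = "\<lambda>\<omega>. ((Y \<omega> - a) * (Y \<omega> - a) + (Z \<omega> - b) * (Z \<omega> - b)) / 2"
  have iS: "integrable M ?S" using iU iV by auto
  have pt: "\<bar>(Y \<omega> - a) * (Z \<omega> - b)\<bar> \<le> ?S \<omega>" for \<omega>
    by (rule amgm_abs)
  have iUV: "integrable M (\<lambda>\<omega>. (Y \<omega> - a) * (Z \<omega> - b))"
    by (rule Bochner_Integration.integrable_bound[OF iS]) (use pt in \<open>auto intro: order_trans\<close>)
  have iSe: "integral\<^sup>L M ?S = (integral\<^sup>L M (\<lambda>\<omega>. (Y \<omega> - a) * (Y \<omega> - a)) + integral\<^sup>L M (\<lambda>\<omega>. (Z \<omega> - b) * (Z \<omega> - b))) / 2"
    using iU iV by simp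
  have h1: "integral\<^sup>L M (\<lambda>\<omega>. (Y \<omega> - a) * (Z \<omega> - b)) \<le> integral\<^sup>L M ?S"
    by (rule integral_mono[OF iUV iS]) (rule abs_le_D1[OF pt])
  have h2: "integral\<^sup>L M (\<lambda>\<omega>. - ((Y \<omega> - a) * (Z \<omega> - b))) \<le> integral\<^sup>L M ?S"
    by (rule integral_mono[OF _ iS]) (use iUV in simp, rule abs_le_D2[OF pt])
  show ?thesis using h1 h2 iSe by (simp add: abs_le_iff)
qed

theorem proposition1:
  fixes M :: "'a measure"
    and n p s :: "nat \<Rightarrow> nat"
    and X :: "nat \<Rightarrow> nat \<Rightarrow> 'a \<Rightarrow> nat \<Rightarrow> real"
    and mu theta :: "nat \<Rightarrow> nat \<Rightarrow> real"
    and Sigma :: "nat \<Rightarrow> nat \<Rightarrow> nat \<Rightarrow> real"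
    and m Cw K1 K2 C :: real
    and r1 r2 r3 :: "nat \<Rightarrow> real"
  defines "Delta \<equiv> \<lambda>k. dotp (p k) (mu k) (theta k)"
    and "wstar \<equiv> \<lambda>k j. m * theta k j / dotp (p k) (mu k) (theta k)"
  assumes M: "prob_space M"
    and n_lim: "filterlim n at_top sequentially"
    and p_lim: "filterlim p at_top sequentially"
    \<comment> \<open>data: observations x_1..x_n of a (weakly) stationary series with mean mu, covariance Sigma\<close>
    and X_meas: "\<And>k i j. (\<lambda>\<omega>. X k i \<omega> j) \<in> borel_measurable M"
    and X_sq_int: "\<And>k i j. integrable M (\<lambda>\<omega>. (X k i \<omega> j)\<^sup>2)"
    and X_mean: "\<And>k i j. i < n k \<Longrightarrow> j < p k \<Longrightarrow> integral\<^sup>L M (\<lambda>\<omega>. X k i \<omega> j) = mu k j"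
    and X_cov: "\<And>k i j l. i < n k \<Longrightarrow> j < p k \<Longrightarrow> l < p k \<Longrightarrow>
        integral\<^sup>L M (\<lambda>\<omega>. (X k i \<omega> j - mu k j) * (X k i \<omega> l - mu k l)) = Sigma k j l"
    \<comment> \<open>Sigma invertible, theta = Sigma^{-1} mu, Delta_p > 0, m \<noteq> 0\<close>
    and Sigma_inv: "\<And>k v. (\<forall>j<p k. matvec (p k) (Sigma k) v j = 0) \<Longrightarrow> (\<forall>j<p k. v j = 0)"
    and theta_def: "\<And>k j. j < p k \<Longrightarrow> matvec (p k) (Sigma k) (theta k) j = mu k j"
    and Delta_pos: "\<And>k. Delta k > 0"
    and m_nz: "m \<noteq> 0"
    \<comment> \<open>MP1\<close>
    and MP1_sparse: "\<And>k. l0norm (p k) (wstar k) \<le> s k"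
    and MP1_bound: "Cw > 0" "\<And>k. supnorm (p k) (wstar k) \<le> Cw"
    \<comment> \<open>MP2\<close>
    and MP2_S: "bigOP M (\<lambda>k \<omega>. mat_supnorm (p k)
                  (\<lambda>j l. Scheck (n k) (X k) (mu k) \<omega> j l - Sigma k j l)) r2"
    and MP2_x: "bigOP M (\<lambda>k \<omega>. supnorm (p k) (\<lambda>j. xbar (n k) (X k) \<omega> j - mu k j)) r3"
    \<comment> \<open>MP3\<close>
    and MP3: "K1 > 0" "K2 > 0" "C > 0"
      "\<And>k j. j < p k \<Longrightarrow> \<bar>mu k j\<bar> \<le> K1"
      "\<And>k j. j < p k \<Longrightarrow> Sigma k j j \<le> K2"
      "\<And>k. quadf (p k) (Sigma k) (wstar k) \<le> C"
    \<comment> \<open>rates\<close>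
    and rates_nonneg: "\<And>k. r1 k \<ge> 0" "\<And>k. r2 k \<ge> 0" "\<And>k. r3 k \<ge> 0"
    and rates_o1: "r1 \<longlonglongrightarrow> 0" "r2 \<longlonglongrightarrow> 0" "r3 \<longlonglongrightarrow> 0"
    and rate_cond: "(\<lambda>k. real (s k) * r1 k
                      + Delta k * (real (s k))\<^sup>2 * (r2 k + (r3 k)\<^sup>2)) \<longlonglongrightarrow> 0"
  shows "\<exists>C0>0. \<forall>(lam :: nat \<Rightarrow> real) (thetahat :: nat \<Rightarrow> 'a \<Rightarrow> nat \<Rightarrow> real).
           (\<forall>k. lam k \<ge> C0 * (Delta k * real (s k) * (r2 k + (r3 k)\<^sup>2) + r3 k))
           \<longrightarrow> (\<forall>k j. (\<lambda>\<omega>. thetahat k \<omega> j) \<in> borel_measurable M)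
           \<longrightarrow> (\<forall>k. \<forall>\<omega>\<in>space M.
                 (\<exists>eta. dantzig_feasible (p k) (Shat (n k) (X k) \<omega>) (xbar (n k) (X k) \<omega>) (lam k) eta)
                 \<longrightarrow> dantzig_solution (p k) (Shat (n k) (X k) \<omega>) (xbar (n k) (X k) \<omega>) (lam k)
                       (thetahat k \<omega>))
           \<longrightarrow> bigOP M (\<lambda>k \<omega>. l1norm (p k) (\<lambda>j. thetahat k \<omega> j - theta k j)) r1
           \<longrightarrow> conv_in_prob M
                 (\<lambda>k \<omega>. let Dhat = dotp (p k) (xbar (n k) (X k) \<omega>) (thetahat k \<omega>);
                             what = (\<lambda>j. m * thetahat k \<omega> j / Dhat)
                         in quadf (p k) (Sigma k) what / quadf (p k) (Sigma k) (wstar k)) 1"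
proof -
  interpret P: prob_space M by (rule M)
  have Dnz: "Delta k \<noteq> 0" for k using Delta_pos[of k] by simp
  have mnz2: "m^2 > 0" using m_nz by simp
  have qtheta: "quadf (p k) (Sigma k) (theta k) = Delta k" for k
  proof -
    have "quadf (p k) (Sigma k) (theta k) = dotp (p k) (theta k) (matvec (p k) (Sigma k) (theta k))"
      by (rule quadf_matvec)
    also have "\<dots> = dotp (p k) (theta k) (mu k)"
      unfolding dotp_def by (intro sum.cong refl) (simp add: theta_def)
    also have "\<dots> = Delta k" unfolding Delta_def dotp_def by (simp add: mult.commute)
    finally show ?thesis .
  qed
  have wstar_eq: "wstar k = (\<lambda>j. (m / Delta k) * theta k j)" for k
    unfolding wstar_def Delta_def by auto
  have qwstar: "quadf (p k) (Sigma k) (wstar k) = m^2 / Delta k" for k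
    unfolding wstar_eq quadf_scale qtheta using Dnz[of k] by (simp add: power2_eq_square)
  have Delta_lb: "m^2 / C \<le> Delta k" for k
  proof -
    have "m^2 / Delta k \<le> C" using MP3(6)[of k] qwstar[of k] by simp
    then have "m^2 \<le> C * Delta k" using Delta_pos[of k] by (simp add: divide_le_eq)
    then show ?thesis using MP3(3) by (simp add: divide_le_eq mult.commute)
  qed
  have invD: "1 / Delta k \<le> C / m^2" for k
    using Delta_lb[of k] mnz2 Delta_pos[of k] MP3(3)
    by (simp add: divide_le_eq le_divide_eq field_simps)
  have l1w: "l1norm (p k) (wstar k) \<le> real (s k) * Cw" for k
  proof -
    let ?S = "{j. j < p k \<and> wstar k j \<noteq> 0}"
    have "l1norm (p k) (wstar k) = (\<Sum>j\<in>?S. \<bar>wstar k j\<bar>)"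
      unfolding l1norm_def by (rule sum.mono_neutral_right) auto
    also have "\<dots> \<le> (\<Sum>j\<in>?S. Cw)"
      by (intro sum_mono) (use supnorm_ge[of _ "p k" "wstar k"] MP1_bound(2)[of k] in force)
    also have "\<dots> = real (card ?S) * Cw" by simp
    also have "\<dots> \<le> real (s k) * Cw"
      using MP1_sparse[of k] MP1_bound(1) unfolding l0norm_def by (intro mult_right_mono) auto
    finally show ?thesis .
  qed
  have l1theta: "l1norm (p k) (theta k) \<le> Delta k * (real (s k) * Cw / \<bar>m\<bar>)" for k
  proof -
    have "theta k = (\<lambda>j. (Delta k / m) * wstar k j)"
      unfolding wstar_eq using Dnz[of k] m_nz by auto
    then have "l1norm (p k) (theta k) = \<bar>Delta k / m\<bar> * l1norm (p k) (wstar k)"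
      unfolding l1norm_def by (simp add: abs_mult sum_distrib_left)
    also have "\<dots> \<le> \<bar>Delta k / m\<bar> * (real (s k) * Cw)" by (intro mult_left_mono l1w) auto
    also have "\<dots> = Delta k * (real (s k) * Cw / \<bar>m\<bar>)" using Delta_pos[of k] by (simp add: abs_divide)
    finally show ?thesis .
  qed
  have Ssym: "Sigma k j l = Sigma k l j" if "n k > 0" "j < p k" "l < p k" for k j l
    using X_cov[of 0 k j l] X_cov[of 0 k l j] that by (simp add: mult.commute)
  have Sbound: "\<bar>Sigma k j l\<bar> \<le> K2" if "n k > 0" "j < p k" "l < p k" for k j l
  proof -
    have "\<bar>Sigma k j l\<bar> \<le> (Sigma k j j + Sigma k l l) / 2"
      using cov_bound[OF M X_meas[of k 0 j] X_meas[of k 0 l] X_sq_int[of k 0 j] X_sq_int[of k 0 l], where a="mu k j" and b="mu k l"]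
        X_cov[of 0 k j l] X_cov[of 0 k j j] X_cov[of 0 k l l] that by simp
    also have "\<dots> \<le> K2" using MP3(5)[of j k] MP3(5)[of l k] that by simp
    finally show ?thesis .
  qed
  have det: "\<bar>quadf (p k) (Sigma k) (\<lambda>j. m * th j / dotp (p k) xb th) / quadf (p k) (Sigma k) (wstar k) - 1\<bar> \<le> 6 * eta"
    if nk: "n k > 0" and E0: "0 \<le> E" and T0: "0 \<le> T"
      and hE: "l1norm (p k) (\<lambda>j. th j - theta k j) \<le> E"
      and hT: "\<And>j. j < p k \<Longrightarrow> \<bar>xb j - mu k j\<bar> \<le> T"
      and hu: "(2 * K1 * E + K2 * E^2) * (C / m^2) \<le> eta"
      and hv: "(K1 * E + T * E) * (C / m^2) + T * (real (s k) * Cw / \<bar>m\<bar>) \<le> eta"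
      and eta4: "eta \<le> 1/4"
    for k th xb E T eta
  proof -
    define d where "d = (\<lambda>j. th j - theta k j)"
    have th_eq: "th = (\<lambda>j. theta k j + d j)" unfolding d_def by auto
    let ?D = "Delta k"
    have Dp: "?D > 0" by (rule Delta_pos)
    have q: "quadf (p k) (Sigma k) th = ?D + 2 * dotp (p k) d (mu k) + quadf (p k) (Sigma k) d"
    proof -
      have "quadf (p k) (Sigma k) th = quadf (p k) (Sigma k) (theta k) + 2 * dotp (p k) d (matvec (p k) (Sigma k) (theta k)) + quadf (p k) (Sigma k) d"
        unfolding th_eq by (rule quadf_add) (use Ssym nk in auto)
      moreover have "dotp (p k) d (matvec (p k) (Sigma k) (theta k)) = dotp (p k) d (mu k)"
        unfolding dotp_def by (intro sum.cong refl) (simp add: theta_def)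
      ultimately show ?thesis using qtheta by simp
    qed
    have dmu: "\<bar>dotp (p k) d (mu k)\<bar> \<le> K1 * E"
    proof -
      have "dotp (p k) d (mu k) = dotp (p k) (mu k) d" unfolding dotp_def by (simp add: mult.commute)
      moreover have "\<bar>dotp (p k) (mu k) d\<bar> \<le> K1 * l1norm (p k) d" by (rule dotp_bound) (rule MP3(4))
      moreover have "K1 * l1norm (p k) d \<le> K1 * E" using hE MP3(1) unfolding d_def by simp
      ultimately show ?thesis by simp
    qed
    have qd: "\<bar>quadf (p k) (Sigma k) d\<bar> \<le> K2 * E^2"
    proof -
      have "\<bar>quadf (p k) (Sigma k) d\<bar> \<le> K2 * (l1norm (p k) d)^2"
        by (rule quadf_bound) (use Sbound nk in auto)
      also have "\<dots> \<le> K2 * E^2" using hE MP3(2) l1norm_nonneg[of "p k" d] unfolding d_def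
        by (intro mult_left_mono power_mono) auto
      finally show ?thesis .
    qed
    define a where "a = quadf (p k) (Sigma k) th / ?D"
    define b where "b = dotp (p k) xb th / ?D"
    have ha: "\<bar>a - 1\<bar> \<le> eta"
    proof -
      have "a - 1 = (2 * dotp (p k) d (mu k) + quadf (p k) (Sigma k) d) / ?D"
        unfolding a_def q using Dp by (simp add: field_simps)
      then have "\<bar>a - 1\<bar> = \<bar>2 * dotp (p k) d (mu k) + quadf (p k) (Sigma k) d\<bar> * (1 / ?D)"
        using Dp by simp
      also have "\<dots> \<le> (2 * K1 * E + K2 * E^2) * (C / m^2)"
      proof (rule mult_mono)
        show "\<bar>2 * dotp (p k) d (mu k) + quadf (p k) (Sigma k) d\<bar> \<le> 2 * K1 * E + K2 * E^2"
          using dmu qd by linarith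
        show "1 / ?D \<le> C / m^2" by (rule invD)
        show "0 \<le> 2 * K1 * E + K2 * E^2" using MP3(1,2) E0 by simp
      qed (use Dp in simp)
      finally show ?thesis using hu by linarith
    qed
    have hb: "\<bar>b - 1\<bar> \<le> eta"
    proof -
      have split: "dotp (p k) xb th = dotp (p k) (\<lambda>j. xb j - mu k j) th + ?D + dotp (p k) d (mu k)"
        unfolding dotp_def Delta_def d_def by (simp add: sum.distrib[symmetric] algebra_simps)
      have l1th: "l1norm (p k) th \<le> l1norm (p k) (theta k) + E"
      proof -
        have "(\<Sum>j<p k. \<bar>th j\<bar>) \<le> (\<Sum>j<p k. \<bar>theta k j\<bar> + \<bar>d j\<bar>)"
          by (intro sum_mono) (simp add: d_def)
        then have "l1norm (p k) th \<le> l1norm (p k) (theta k) + l1norm (p k) d"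
          unfolding l1norm_def by (simp add: sum.distrib)
        then show ?thesis using hE unfolding d_def by simp
      qed
      have x1: "\<bar>dotp (p k) (\<lambda>j. xb j - mu k j) th\<bar> \<le> T * l1norm (p k) th"
        by (rule dotp_bound) (rule hT)
      have x2: "T * l1norm (p k) th \<le> T * (?D * (real (s k) * Cw / \<bar>m\<bar>)) + T * E"
        using mult_left_mono[OF order_trans[OF l1th add_right_mono[OF l1theta]] T0]
        by (simp add: algebra_simps)
      have "b - 1 = (dotp (p k) (\<lambda>j. xb j - mu k j) th + dotp (p k) d (mu k)) / ?D"
        unfolding b_def split using Dp by (simp add: field_simps)
      then have "\<bar>b - 1\<bar> = \<bar>dotp (p k) (\<lambda>j. xb j - mu k j) th + dotp (p k) d (mu k)\<bar> / ?D"
        using Dp by simp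
      also have "\<dots> \<le> (T * (?D * (real (s k) * Cw / \<bar>m\<bar>)) + (T * E + K1 * E)) / ?D"
        using x1 x2 dmu Dp by (intro divide_right_mono) linarith+
      also have "\<dots> = T * (real (s k) * Cw / \<bar>m\<bar>) + (T * E + K1 * E) * (1 / ?D)"
        using Dp by (simp add: field_simps)
      also have "\<dots> \<le> T * (real (s k) * Cw / \<bar>m\<bar>) + (T * E + K1 * E) * (C / m^2)"
        using invD[of k] T0 E0 MP3(1) by (intro add_left_mono mult_left_mono) auto
      finally show ?thesis using hv by (simp add: algebra_simps)
    qed
    have ratio: "quadf (p k) (Sigma k) (\<lambda>j. m * th j / dotp (p k) xb th) / quadf (p k) (Sigma k) (wstar k) = a / b^2"
    proof -
      have fe: "(\<lambda>j. m * th j / dotp (p k) xb th) = (\<lambda>j. (m / dotp (p k) xb th) * th j)" by auto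
      have "quadf (p k) (Sigma k) (\<lambda>j. m * th j / dotp (p k) xb th) = (m / dotp (p k) xb th)^2 * quadf (p k) (Sigma k) th"
        unfolding fe by (rule quadf_scale)
      then show ?thesis unfolding qwstar a_def b_def using Dp m_nz
        by (cases "dotp (p k) xb th = 0") (simp_all add: field_simps power2_eq_square)
    qed
    show ?thesis unfolding ratio by (rule ratio_lemma[OF ha hb eta4])
  qed
  have sr3: "(\<lambda>k. real (s k) * r3 k) \<longlonglongrightarrow> 0"
  proof -
    let ?g = "\<lambda>k. real (s k) * r1 k + Delta k * (real (s k))\<^sup>2 * (r2 k + (r3 k)\<^sup>2)"
    have le: "(real (s k) * r3 k)^2 \<le> (C / m^2) * ?g k" for k
    proof -
      define x where "x = (real (s k))^2 * (r3 k)^2"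
      have x0: "0 \<le> x" unfolding x_def by simp
      have a1: "0 \<le> real (s k) * r1 k" using rates_nonneg(1)[of k] by simp
      have s1: "(m^2 / C) * x \<le> Delta k * x"
        using Delta_lb[of k] x0 by (rule mult_right_mono)
      have e2: "Delta k * (real (s k))\<^sup>2 * (r2 k + (r3 k)\<^sup>2) = Delta k * ((real (s k))\<^sup>2 * r2 k) + Delta k * x"
        unfolding x_def by (simp add: algebra_simps)
      have a2: "0 \<le> Delta k * ((real (s k))\<^sup>2 * r2 k)"
        using Delta_pos[of k] rates_nonneg(2)[of k] by simp
      have "(m^2 / C) * x \<le> ?g k" using s1 e2 a1 a2 by linarith
      then have "(C / m^2) * ((m^2 / C) * x) \<le> (C / m^2) * ?g k"
        using MP3(3) mnz2 by (intro mult_left_mono) auto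
      moreover have "(C / m^2) * (m^2 / C) = 1" using MP3(3) mnz2 by simp
      moreover have "x = (real (s k) * r3 k)^2" unfolding x_def by (simp add: power_mult_distrib)
      ultimately show ?thesis by (simp add: mult.assoc[symmetric])
    qed
    have lim1: "(\<lambda>k. (C / m^2) * ?g k) \<longlonglongrightarrow> 0"
      using tendsto_mult[OF tendsto_const rate_cond, of "C / m^2"] by simp
    have ev1: "eventually (\<lambda>k. (0::real) \<le> (real (s k) * r3 k)^2) sequentially"
      by (rule always_eventually) simp
    have ev2: "eventually (\<lambda>k. (real (s k) * r3 k)^2 \<le> (C / m^2) * ?g k) sequentially"
      by (rule always_eventually) (use le in blast)
    have "(\<lambda>k. (real (s k) * r3 k)^2) \<longlonglongrightarrow> 0"
      by (rule tendsto_sandwich[OF ev1 ev2 tendsto_const lim1])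
    then have "(\<lambda>k. sqrt ((real (s k) * r3 k)^2)) \<longlonglongrightarrow> sqrt 0" by (rule tendsto_real_sqrt)
    moreover have "sqrt ((real (s k) * r3 k)^2) = real (s k) * r3 k" for k
      using rates_nonneg(3)[of k] by simp
    ultimately show ?thesis by simp
  qed
  have npos: "eventually (\<lambda>k. n k > 0) sequentially"
    using n_lim unfolding filterlim_at_top by (auto elim: eventually_mono[OF spec[of _ 1]])
  have main: "conv_in_prob M (\<lambda>k \<omega>. let Dhat = dotp (p k) (xbar (n k) (X k) \<omega>) (thetahat k \<omega>);
                             what = (\<lambda>j. m * thetahat k \<omega> j / Dhat)
                         in quadf (p k) (Sigma k) what / quadf (p k) (Sigma k) (wstar k)) 1"
    if th_meas: "\<forall>k j. (\<lambda>\<omega>. thetahat k \<omega> j) \<in> borel_measurable M"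
      and MP4: "bigOP M (\<lambda>k \<omega>. l1norm (p k) (\<lambda>j. thetahat k \<omega> j - theta k j)) r1"
    for thetahat :: "nat \<Rightarrow> 'a \<Rightarrow> nat \<Rightarrow> real"
    unfolding conv_in_prob_def
  proof (intro allI impI LIMSEQ_I)
    fix \<epsilon> \<delta> :: real assume e0: "\<epsilon> > 0" and d0: "\<delta> > 0"
    obtain B1 K1' where hB1: "\<And>k. k \<ge> K1' \<Longrightarrow> measure M {\<omega> \<in> space M.
        \<bar>l1norm (p k) (\<lambda>j. thetahat k \<omega> j - theta k j)\<bar> > B1 * r1 k} < \<delta> / 2"
      using MP4 d0 unfolding bigOP_def by (meson half_gt_zero)
    obtain B3 K3 where hB3: "\<And>k. k \<ge> K3 \<Longrightarrow> measure M {\<omega> \<in> space M.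
        \<bar>supnorm (p k) (\<lambda>j. xbar (n k) (X k) \<omega> j - mu k j)\<bar> > B3 * r3 k} < \<delta> / 2"
      using MP2_x d0 unfolding bigOP_def by (meson half_gt_zero)
    define eta where "eta = min (1/4) (\<epsilon> / 12)"
    have eta0: "eta > 0" using e0 by (simp add: eta_def)
    define u where "u = (\<lambda>k. (2 * K1 * (\<bar>B1\<bar> * r1 k) + K2 * (\<bar>B1\<bar> * r1 k)^2) * (C / m^2))"
    define v where "v = (\<lambda>k. (K1 * (\<bar>B1\<bar> * r1 k) + (\<bar>B3\<bar> * r3 k) * (\<bar>B1\<bar> * r1 k)) * (C / m^2)
                          + \<bar>B3\<bar> * (real (s k) * r3 k) * Cw / \<bar>m\<bar>)"
    have "u \<longlonglongrightarrow> (2 * K1 * (\<bar>B1\<bar> * 0) + K2 * (\<bar>B1\<bar> * 0)^2) * (C / m^2)"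
      unfolding u_def by (intro tendsto_intros rates_o1)
    then have u0: "u \<longlonglongrightarrow> 0" by simp
    have "v \<longlonglongrightarrow> (K1 * (\<bar>B1\<bar> * 0) + (\<bar>B3\<bar> * 0) * (\<bar>B1\<bar> * 0)) * (C / m^2) + \<bar>B3\<bar> * 0 * Cw / \<bar>m\<bar>"
      unfolding v_def by (intro tendsto_intros rates_o1 sr3) (simp add: m_nz)
    then have v0: "v \<longlonglongrightarrow> 0" by simp
    have ev: "eventually (\<lambda>k. u k < eta \<and> v k < eta \<and> n k > 0 \<and> k \<ge> K1' \<and> k \<ge> K3) sequentially"
      using order_tendstoD(2)[OF u0 eta0] order_tendstoD(2)[OF v0 eta0] npos
        eventually_ge_at_top[of K1'] eventually_ge_at_top[of K3]
      by eventually_elim auto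
    then obtain K where hK: "\<And>k. k \<ge> K \<Longrightarrow> u k < eta \<and> v k < eta \<and> n k > 0 \<and> k \<ge> K1' \<and> k \<ge> K3"
      unfolding eventually_sequentially by blast
    show "\<exists>no. \<forall>k\<ge>no. norm (measure M {\<omega> \<in> space M. \<bar>(let Dhat = dotp (p k) (xbar (n k) (X k) \<omega>) (thetahat k \<omega>);
                             what = (\<lambda>j. m * thetahat k \<omega> j / Dhat)
                         in quadf (p k) (Sigma k) what / quadf (p k) (Sigma k) (wstar k)) - 1\<bar> > \<epsilon>} - 0) < \<delta>"
    proof (intro exI allI impI)
      fix k assume kK: "K \<le> k"
      note hk = hK[OF kK]
      define SB where "SB = {\<omega> \<in> space M. \<bar>l1norm (p k) (\<lambda>j. thetahat k \<omega> j - theta k j)\<bar> > B1 * r1 k}"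
      define SC where "SC = {\<omega> \<in> space M. \<bar>supnorm (p k) (\<lambda>j. xbar (n k) (X k) \<omega> j - mu k j)\<bar> > B3 * r3 k}"
      have SBm: "SB \<in> sets M"
      proof -
        have [measurable]: "\<And>j. (\<lambda>\<omega>. thetahat k \<omega> j) \<in> borel_measurable M" using th_meas by auto
        show ?thesis unfolding SB_def l1norm_def by measurable
      qed
      have SCm: "SC \<in> sets M"
      proof -
        have [measurable]: "\<And>i j. (\<lambda>\<omega>. X k i \<omega> j) \<in> borel_measurable M" by (rule X_meas)
        have "SC = {\<omega> \<in> space M. B3 * r3 k < 0 \<or> (\<exists>j<p k. B3 * r3 k < \<bar>xbar (n k) (X k) \<omega> j - mu k j\<bar>)}"
          unfolding SC_def by (simp add: abs_of_nonneg[OF supnorm_nonneg] supnorm_gt_iff)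
        also have "\<dots> \<in> sets M" unfolding xbar_def by measurable
        finally show ?thesis .
      qed
      have sub: "{\<omega> \<in> space M. \<bar>(let Dhat = dotp (p k) (xbar (n k) (X k) \<omega>) (thetahat k \<omega>);
                             what = (\<lambda>j. m * thetahat k \<omega> j / Dhat)
                         in quadf (p k) (Sigma k) what / quadf (p k) (Sigma k) (wstar k)) - 1\<bar> > \<epsilon>} \<subseteq> SB \<union> SC"
      proof (rule subsetI, rule ccontr)
        fix \<omega> assume w: "\<omega> \<in> {\<omega> \<in> space M. \<bar>(let Dhat = dotp (p k) (xbar (n k) (X k) \<omega>) (thetahat k \<omega>);
                             what = (\<lambda>j. m * thetahat k \<omega> j / Dhat)
                         in quadf (p k) (Sigma k) what / quadf (p k) (Sigma k) (wstar k)) - 1\<bar> > \<epsilon>}"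
          and nw: "\<omega> \<notin> SB \<union> SC"
        have sp: "\<omega> \<in> space M" using w by simp
        have hE: "l1norm (p k) (\<lambda>j. thetahat k \<omega> j - theta k j) \<le> \<bar>B1\<bar> * r1 k"
          using nw sp rates_nonneg(1)[of k] unfolding SB_def
          by (auto intro: order_trans[OF _ mult_right_mono[OF abs_ge_self]])
        have hT: "\<bar>xbar (n k) (X k) \<omega> j - mu k j\<bar> \<le> \<bar>B3\<bar> * r3 k" if "j < p k" for j
        proof -
          have "supnorm (p k) (\<lambda>j. xbar (n k) (X k) \<omega> j - mu k j) \<le> B3 * r3 k"
            using nw sp supnorm_ge[OF that, of "\<lambda>j. xbar (n k) (X k) \<omega> j - mu k j"] unfolding SC_def by auto
          also have "\<dots> \<le> \<bar>B3\<bar> * r3 k" using rates_nonneg(3)[of k] by (intro mult_right_mono) auto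
          finally show ?thesis using supnorm_ge[OF that, of "\<lambda>j. xbar (n k) (X k) \<omega> j - mu k j"] by simp
        qed
        have "\<bar>quadf (p k) (Sigma k) (\<lambda>j. m * thetahat k \<omega> j / dotp (p k) (xbar (n k) (X k) \<omega>) (thetahat k \<omega>)) / quadf (p k) (Sigma k) (wstar k) - 1\<bar> \<le> 6 * eta"
        proof (rule det)
          show "n k > 0" using hk by simp
          show "0 \<le> \<bar>B1\<bar> * r1 k" using rates_nonneg(1)[of k] by simp
          show "0 \<le> \<bar>B3\<bar> * r3 k" using rates_nonneg(3)[of k] by simp
          show "(2 * K1 * (\<bar>B1\<bar> * r1 k) + K2 * (\<bar>B1\<bar> * r1 k)^2) * (C / m^2) \<le> eta"
            using hk unfolding u_def by simp
          show "(K1 * (\<bar>B1\<bar> * r1 k) + (\<bar>B3\<bar> * r3 k) * (\<bar>B1\<bar> * r1 k)) * (C / m^2) + (\<bar>B3\<bar> * r3 k) * (real (s k) * Cw / \<bar>m\<bar>) \<le> eta"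
            using hk unfolding v_def by (simp add: algebra_simps)
          show "eta \<le> 1/4" by (simp add: eta_def)
        qed (use hE hT in auto)
        moreover have "6 * eta < \<epsilon>" using e0 by (simp add: eta_def)
        ultimately show False using w by (simp add: Let_def)
      qed
      have "measure M {\<omega> \<in> space M. \<bar>(let Dhat = dotp (p k) (xbar (n k) (X k) \<omega>) (thetahat k \<omega>);
                             what = (\<lambda>j. m * thetahat k \<omega> j / Dhat)
                         in quadf (p k) (Sigma k) what / quadf (p k) (Sigma k) (wstar k)) - 1\<bar> > \<epsilon>} \<le> measure M (SB \<union> SC)"
        using sub SBm SCm by (intro P.finite_measure_mono) auto
      also have "\<dots> \<le> measure M SB + measure M SC" using SBm SCm by (rule measure_Un_le)
      also have "\<dots> < \<delta> / 2 + \<delta> / 2"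
        using hB1[of k] hB3[of k] hk unfolding SB_def SC_def by (intro add_strict_mono) auto
      finally show "norm (measure M {\<omega> \<in> space M. \<bar>(let Dhat = dotp (p k) (xbar (n k) (X k) \<omega>) (thetahat k \<omega>);
                             what = (\<lambda>j. m * thetahat k \<omega> j / Dhat)
                         in quadf (p k) (Sigma k) what / quadf (p k) (Sigma k) (wstar k)) - 1\<bar> > \<epsilon>} - 0) < \<delta>"
        by simp
    qed
  qed
  show ?thesis
    by (rule exI[of _ 1]) (use main in auto)
qed


end
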